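(* Suppose $D$ is finite. Then the dimension of $\mathcal{A}(D)/\mathcal{V}(D)$ equals the $\mathbb{F}_2$-rank of the adjacency matrix of the collinearity graph of the Fischer space $\Pi(D)$.
   Context: Let $D$ be a class of $3$-transpositions generating a group $G$ (a conjugacy class of involutions with $o(de)\in\{1,2,3\}$ for $d,e\in D$). $\Pi(D)$ has point set $D$ and lines the triples $\{d,e,d^e\}$ with $d,e$ non-commuting; its collinearity graph joins distinct collinear (i.e., non-commuting) points. $\mathcal{A}(D)$ is the $\mathbb{F}_2$-space with basis $D$ and bilinear product $d*e=d+e+f$ if $\{d,e,f\}$ is a line, $0$ otherwise; the form $\langle d,e\rangle$ is $1$ if $d,e$ do not commute and $0$ otherwise; $\mathcal{V}(D)$ is its radical. *)

theory Defs
  imports "HOL-Algebra.Algebra" "HOL-Library.Z2" "HOL-Library.Function_Algebras"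
begin

definition conj_class :: "('g, 'b) monoid_scheme \<Rightarrow> 'g \<Rightarrow> 'g set" where
  "conj_class G a = {inv\<^bsub>G\<^esub> g \<otimes>\<^bsub>G\<^esub> a \<otimes>\<^bsub>G\<^esub> g | g. g \<in> carrier G}"

definition three_transp_class :: "('g, 'b) monoid_scheme \<Rightarrow> 'g set \<Rightarrow> bool" where
  "three_transp_class G D \<longleftrightarrow>
     group G \<and>
     (\<exists>a \<in> carrier G. D = conj_class G a) \<and>
     (\<forall>d \<in> D. d \<noteq> \<one>\<^bsub>G\<^esub> \<and> d \<otimes>\<^bsub>G\<^esub> d = \<one>\<^bsub>G\<^esub>) \<and>
     (\<forall>d \<in> D. \<forall>e \<in> D. group.ord G (d \<otimes>\<^bsub>G\<^esub> e) \<in> {1, 2, 3}) \<and>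
     generate G D = carrier G"

definition commute :: "('g, 'b) monoid_scheme \<Rightarrow> 'g \<Rightarrow> 'g \<Rightarrow> bool" where
  "commute G d e \<longleftrightarrow> d \<otimes>\<^bsub>G\<^esub> e = e \<otimes>\<^bsub>G\<^esub> d"

definition conjg :: "('g, 'b) monoid_scheme \<Rightarrow> 'g \<Rightarrow> 'g \<Rightarrow> 'g" where
  "conjg G d e = inv\<^bsub>G\<^esub> e \<otimes>\<^bsub>G\<^esub> d \<otimes>\<^bsub>G\<^esub> e"

definition fischer_lines :: "('g, 'b) monoid_scheme \<Rightarrow> 'g set \<Rightarrow> 'g set set" where
  "fischer_lines G D = {{d, e, conjg G d e} | d e. d \<in> D \<and> e \<in> D \<and> \<not> commute G d e}"

definition collinear_adj :: "('g, 'b) monoid_scheme \<Rightarrow> 'g set \<Rightarrow> 'g \<Rightarrow> 'g \<Rightarrow> bool" where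
  "collinear_adj G D d e \<longleftrightarrow> d \<in> D \<and> e \<in> D \<and> d \<noteq> e \<and>
     (\<exists>L \<in> fischer_lines G D. d \<in> L \<and> e \<in> L)"

definition adj_matrix :: "('g, 'b) monoid_scheme \<Rightarrow> 'g set \<Rightarrow> 'g \<Rightarrow> 'g \<Rightarrow> bit" where
  "adj_matrix G D d e = (if collinear_adj G D d e then 1 else 0)"

definition f2scale :: "bit \<Rightarrow> ('g \<Rightarrow> bit) \<Rightarrow> ('g \<Rightarrow> bit)" where
  "f2scale c f = (\<lambda>x. c * f x)"

lemma vector_space_f2scale: "vector_space f2scale"
  by unfold_locales (auto simp: f2scale_def algebra_simps fun_eq_iff)

definition f2_rank :: "'g set \<Rightarrow> ('g \<Rightarrow> 'g \<Rightarrow> bit) \<Rightarrow> nat" where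
  "f2_rank D M = vector_space.dim f2scale
     ((\<lambda>e. (\<lambda>d. if d \<in> D then M d e else 0)) ` D)"

text \<open>A(D): F_2-space with basis D, realised as functions D \<rightarrow> F_2 (zero outside D);
  the basis vector of d is the indicator of d.\<close>
definition A_space :: "'g set \<Rightarrow> ('g \<Rightarrow> bit) set" where
  "A_space D = {x. \<forall>g. g \<notin> D \<longrightarrow> x g = 0}"

definition basis_vec :: "'g \<Rightarrow> ('g \<Rightarrow> bit)" where
  "basis_vec d = (\<lambda>g. if g = d then 1 else 0)"

definition A_prod :: "('g, 'b) monoid_scheme \<Rightarrow> 'g set \<Rightarrow> ('g \<Rightarrow> bit) \<Rightarrow> ('g \<Rightarrow> bit) \<Rightarrow> ('g \<Rightarrow> bit)" where
  "A_prod G D x y = (\<Sum>d\<in>D. \<Sum>e\<in>D. f2scale (x d * y e)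
      (if commute G d e then 0 else basis_vec d + basis_vec e + basis_vec (conjg G d e)))"

definition A_form :: "('g, 'b) monoid_scheme \<Rightarrow> 'g set \<Rightarrow> ('g \<Rightarrow> bit) \<Rightarrow> ('g \<Rightarrow> bit) \<Rightarrow> bit" where
  "A_form G D x y = (\<Sum>d\<in>D. \<Sum>e\<in>D. x d * y e * (if commute G d e then 0 else 1))"

definition V_radical :: "('g, 'b) monoid_scheme \<Rightarrow> 'g set \<Rightarrow> ('g \<Rightarrow> bit) set" where
  "V_radical G D = {x \<in> A_space D. \<forall>y \<in> A_space D. A_form G D x y = 0}"

definition quotient_dim :: "('g \<Rightarrow> bit) set \<Rightarrow> ('g \<Rightarrow> bit) set \<Rightarrow> nat" where
  "quotient_dim A V = vector_space.dim f2scale A - vector_space.dim f2scale V"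

end

theory Submission
  imports Defs
begin

lemma sum_app: "(\<Sum>i\<in>S. f i) x = (\<Sum>i\<in>S. f i x)"
  by (induction S rule: infinite_finite_induct) auto

lemma form_swap: "(\<Sum>d\<in>D. \<Sum>e\<in>D. (x::'g\<Rightarrow>bit) d * y e * c d e) = (\<Sum>e\<in>D. y e * (\<Sum>d\<in>D. x d * c d e))"
  by (subst sum.swap) (simp only: sum_distrib_left mult.commute mult.left_commute mult.assoc)

interpretation F: vector_space f2scale by (rule vector_space_f2scale)

lemma D_carrier: "three_transp_class G D \<Longrightarrow> D \<subseteq> carrier G"
  unfolding three_transp_class_def conj_class_def
  by (auto intro!: monoid.m_closed[OF group.is_monoid] group.inv_closed)

lemma (in group) key:
  assumes a: "a \<in> carrier G" and b: "b \<in> carrier G" and aa: "a \<otimes> a = \<one>" and bb: "b \<otimes> b = \<one>"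
  and o: "ord (a \<otimes> b) \<in> {1,2,3}"
  and c: "a \<otimes> (b \<otimes> a \<otimes> b) = (b \<otimes> a \<otimes> b) \<otimes> a"
  shows "a \<otimes> b = b \<otimes> a"
proof -
  have x: "a \<otimes> b \<in> carrier G" using a b by simp
  have e: "(a \<otimes> b) [^] ord (a \<otimes> b) = \<one>" using pow_ord_eq_1 x by blast
  have ia: "inv a = a" using aa a by (simp add: inv_char)
  have ib: "inv b = b" using bb b by (simp add: inv_char)
  have iab: "inv (a \<otimes> b) = b \<otimes> a" using ia ib a b by (simp add: inv_mult_group)
  show ?thesis
  proof -
    consider "ord (a \<otimes> b) = 1" | "ord (a \<otimes> b) = 2" | "ord (a \<otimes> b) = 3" using o by blast
    then show ?thesis
    proof cases
      case 1
      then have h: "a \<otimes> b = \<one>" using e x by simp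
      then have "b \<otimes> a = \<one>" using a b inv_comm by blast
      then show ?thesis using h by simp
    next
      case 2
      then have "(a \<otimes> b) \<otimes> (a \<otimes> b) = \<one>" using e x by (simp add: numeral_2_eq_2)
      then have "inv (a \<otimes> b) = a \<otimes> b" using x by (simp add: inv_equality)
      then show ?thesis using iab by simp
    next
      case 3
      then have "(a \<otimes> b) \<otimes> (a \<otimes> b) \<otimes> (a \<otimes> b) = \<one>" using e x by (simp add: numeral_3_eq_3 m_assoc)
      then have "inv (a \<otimes> b) = (a \<otimes> b) \<otimes> (a \<otimes> b)" using x by (intro inv_equality) auto
      then have h: "(a \<otimes> b) \<otimes> (a \<otimes> b) = b \<otimes> a" using iab by simp
      have "(a \<otimes> b) \<otimes> (a \<otimes> b) = (b \<otimes> a) \<otimes> (b \<otimes> a)" using c a b by (simp add: m_assoc)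
      then have "(b \<otimes> a) \<otimes> (b \<otimes> a) = (b \<otimes> a)" using h a b by simp
      then have "b \<otimes> a = \<one>" using a b by simp
      then have "inv (a \<otimes> b) = \<one>" using iab by simp
      then have "a \<otimes> b = \<one>" using x by (metis inv_inv inv_one)
      then show ?thesis using \<open>b \<otimes> a = \<one>\<close> by simp
    qed
  qed
qed

lemma adj_iff:
  assumes "three_transp_class G D"
  shows "collinear_adj G D d e \<longleftrightarrow> d \<in> D \<and> e \<in> D \<and> \<not> commute G d e"
proof
  assume "d \<in> D \<and> e \<in> D \<and> \<not> commute G d e"
  then show "collinear_adj G D d e" unfolding collinear_adj_def fischer_lines_def
    by (auto simp: commute_def)
next
  assume c: "collinear_adj G D d e"
  have grp: "group G" using assms unfolding three_transp_class_def by blast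
  interpret group G by (rule grp)
  have DC: "D \<subseteq> carrier G" using D_carrier assms by blast
  have inv1: "\<And>x. x \<in> D \<Longrightarrow> x \<otimes>\<^bsub>G\<^esub> x = \<one>\<^bsub>G\<^esub>" using assms unfolding three_transp_class_def by blast
  have ordD: "\<And>x y. x \<in> D \<Longrightarrow> y \<in> D \<Longrightarrow> group.ord G (x \<otimes>\<^bsub>G\<^esub> y) \<in> {1,2,3}"
    using assms unfolding three_transp_class_def by blast
  from c obtain a b where ab: "a \<in> D" "b \<in> D" "\<not> commute G a b"
    and de: "d \<in> D" "e \<in> D" "d \<noteq> e" "d \<in> {a, b, conjg G a b}" "e \<in> {a, b, conjg G a b}"
    unfolding collinear_adj_def fischer_lines_def by blast
  have a: "a \<in> carrier G" and b: "b \<in> carrier G" using ab DC by auto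
  have aa: "a \<otimes>\<^bsub>G\<^esub> a = \<one>\<^bsub>G\<^esub>" and bb: "b \<otimes>\<^bsub>G\<^esub> b = \<one>\<^bsub>G\<^esub>" using inv1 ab by auto
  have ib: "inv\<^bsub>G\<^esub> b = b" using bb b by (simp add: inv_char)
  define cc where "cc = b \<otimes>\<^bsub>G\<^esub> a \<otimes>\<^bsub>G\<^esub> b"
  have ccd: "conjg G a b = cc" unfolding conjg_def cc_def ib ..
  have nab: "a \<otimes>\<^bsub>G\<^esub> b \<noteq> b \<otimes>\<^bsub>G\<^esub> a" using ab(3) commute_def by metis
  have nac: "a \<otimes>\<^bsub>G\<^esub> cc \<noteq> cc \<otimes>\<^bsub>G\<^esub> a"
    using key[OF a b aa bb ordD[OF ab(1,2)]] nab cc_def by blast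
  have "b \<otimes>\<^bsub>G\<^esub> cc = a \<otimes>\<^bsub>G\<^esub> b" unfolding cc_def using a b bb by (simp add: m_assoc[symmetric])
  moreover have "cc \<otimes>\<^bsub>G\<^esub> b = b \<otimes>\<^bsub>G\<^esub> a" unfolding cc_def using a b bb by (simp add: m_assoc)
  ultimately have nbc: "b \<otimes>\<^bsub>G\<^esub> cc \<noteq> cc \<otimes>\<^bsub>G\<^esub> b" using nab by simp
  show "d \<in> D \<and> e \<in> D \<and> \<not> commute G d e"
    using de nab nac nbc unfolding ccd commute_def by auto
qed

lemma A_sub: "F.subspace (A_space D)"
  unfolding F.subspace_def A_space_def f2scale_def by auto

lemma A_span: assumes "finite D" shows "A_space D \<subseteq> F.span (basis_vec ` D)"
proof
  fix x assume x: "x \<in> A_space D"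
  have "x = (\<Sum>d\<in>D. f2scale (x d) (basis_vec d))"
  proof
    fix g show "x g = (\<Sum>d\<in>D. f2scale (x d) (basis_vec d)) g"
    proof -
      have "(\<Sum>d\<in>D. f2scale (x d) (basis_vec d)) g = (\<Sum>d\<in>D. if d = g then x g else 0)"
        unfolding sum_app by (rule sum.cong) (auto simp: f2scale_def basis_vec_def)
      then show ?thesis using x assms by (auto simp: A_space_def)
    qed
  qed
  also have "\<dots> \<in> F.span (basis_vec ` D)"
    by (intro F.span_sum F.span_scale F.span_base) auto
  finally show "x \<in> F.span (basis_vec ` D)" .
qed

lemma (in vector_space) rank_nullity_sub:
  assumes lin: "Vector_Spaces.linear scale scale T" and sA: "subspace A" and fF: "finite F"
    and AF: "A \<subseteq> span F"
  shows "dim (T ` A) + dim {x\<in>A. T x = 0} = dim A"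
proof -
  interpret lt: Vector_Spaces.linear scale scale T by (rule lin)
  define K where "K = {x\<in>A. T x = 0}"
  have sK: "subspace K" unfolding K_def subspace_def
    using sA by (auto simp: subspace_def lt.add lt.scale lt.zero)
  obtain BK where BK: "BK \<subseteq> K" "independent BK" "K \<subseteq> span BK" "card BK = dim K"
    using basis_exists by blast
  have BKA: "BK \<subseteq> A" using BK(1) K_def by auto
  obtain C where C: "BK \<subseteq> C" "C \<subseteq> A" "independent C" "A \<subseteq> span C"
    using maximal_independent_subset_extend[OF BKA BK(2)] by blast
  have fC: "finite C" using independent_span_bound[OF fF C(3)] C(2) AF by blast
  have cC: "card C = dim A" using basis_card_eq_dim[OF C(2) C(4) C(3)] .
  have fBK: "finite BK" using fC C(1) finite_subset by blast
  have "T ` A \<subseteq> T ` span C" using C(4) by blast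
  also have "\<dots> = span (T ` C)" using lt.span_image by simp
  also have "\<dots> \<subseteq> span (insert 0 (T ` (C - BK)))"
  proof (rule span_mono)
    show "T ` C \<subseteq> insert 0 (T ` (C - BK))" using BK(1) K_def by auto
  qed
  also have "\<dots> = span (T ` (C - BK))" by simp
  finally have "dim (T ` A) \<le> card (T ` (C - BK))"
    using dim_le_card fC by blast
  also have "\<dots> \<le> card (C - BK)" using fC by (simp add: card_image_le)
  also have "\<dots> = card C - card BK" using C(1) fBK by (simp add: card_Diff_subset)
  finally have le1: "dim (T ` A) + dim K \<le> dim A" using cC BK(4)
    using card_mono[OF fC C(1)] by linarith
  obtain BT where BT: "BT \<subseteq> T ` A" "independent BT" "T ` A \<subseteq> span BT" "card BT = dim (T ` A)"
    using basis_exists by blast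
  have "T ` A \<subseteq> T ` span F" using AF by blast
  also have "\<dots> = span (T ` F)" using lt.span_image by simp
  finally have fBT: "finite BT" using independent_span_bound[OF _ BT(2)] fF BT(1) by blast
  have "\<forall>b\<in>BT. \<exists>a. a \<in> A \<and> T a = b" using BT(1) by blast
  then obtain p where p: "\<And>b. b \<in> BT \<Longrightarrow> p b \<in> A \<and> T (p b) = b" by metis
  define P where "P = p ` BT"
  have TP: "T ` P = BT" unfolding P_def using p by force
  have PA: "span P \<subseteq> A" using p P_def sA by (intro span_minimal) auto
  have "A \<subseteq> span (P \<union> BK)"
  proof
    fix x assume x: "x \<in> A"
    then have "T x \<in> span (T ` P)" using BT(3) TP by blast
    then obtain q where q: "q \<in> span P" "T q = T x" using lt.span_image by auto
    have "x - q \<in> K" unfolding K_def using x q PA sA subspace_diff lt.diff by auto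
    then have "x - q \<in> span (P \<union> BK)" using BK(3) span_mono[of BK "P \<union> BK"] by blast
    moreover have "q \<in> span (P \<union> BK)" using q(1) span_mono[of P "P \<union> BK"] by blast
    ultimately have "q + (x - q) \<in> span (P \<union> BK)" by (metis span_add)
    then show "x \<in> span (P \<union> BK)" by simp
  qed
  then have "dim A \<le> card (P \<union> BK)" using dim_le_card fBT fBK P_def by blast
  also have "\<dots> \<le> card P + card BK" by (rule card_Un_le)
  also have "card P \<le> card BT" unfolding P_def using fBT by (rule card_image_le)
  finally have "dim A \<le> dim (T ` A) + dim K" using BT(4) BK(4) by linarith
  then show ?thesis using le1 K_def by simp
qed

theorem proposition6p1:
  fixes G :: "('g, 'b) monoid_scheme" and D :: "'g set"
  assumes "three_transp_class G D"
    and "finite D"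
  shows "quotient_dim (A_space D) (V_radical G D) = f2_rank D (adj_matrix G D)"
proof -
  define B where "B = (\<lambda>d e. if commute G d e then 0 else (1::bit))"
  define row where "row = (\<lambda>d. \<lambda>e. if e \<in> D then B d e else 0)"
  define T where "T = (\<lambda>x::'g \<Rightarrow> bit. \<lambda>e. if e \<in> D then (\<Sum>d\<in>D. x d * B d e) else 0)"
  have lin: "Vector_Spaces.linear f2scale f2scale T"
    unfolding Vector_Spaces.linear_iff
  proof (intro conjI allI vector_space_f2scale ext)
    fix x y :: "'g \<Rightarrow> bit" and e
    show "T (x + y) e = (T x + T y) e"
      by (cases "e \<in> D") (simp_all only: T_def plus_fun_def distrib_right sum.distrib if_True if_False add_0)
  next
    fix c and x :: "'g \<Rightarrow> bit" and e
    show "T (f2scale c x) e = f2scale c (T x) e"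
      by (cases "e \<in> D") (simp_all only: T_def f2scale_def sum_distrib_left mult.assoc if_True if_False mult_zero_right)
  qed
  have Tb: "T (basis_vec d) = row d" if "d \<in> D" for d
  proof
    fix e
    have "(\<Sum>d'\<in>D. basis_vec d d' * B d' e) = (\<Sum>d'\<in>D. if d' = d then B d e else 0)"
      by (rule sum.cong) (auto simp: basis_vec_def)
    then show "T (basis_vec d) e = row d e" using that assms(2) by (simp add: T_def row_def)
  qed
  have bA: "basis_vec d \<in> A_space D" if "d \<in> D" for d
    using that by (auto simp: A_space_def basis_vec_def)
  interpret lt: Vector_Spaces.linear f2scale f2scale T by (rule lin)
  have img: "T ` A_space D = F.span (row ` D)"
  proof
    show "T ` A_space D \<subseteq> F.span (row ` D)"
    proof
      fix y assume "y \<in> T ` A_space D"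
      then obtain x where x: "x \<in> A_space D" "y = T x" by blast
      have "T x = (\<Sum>d\<in>D. f2scale (x d) (row d))"
        by (auto simp: fun_eq_iff sum_app T_def f2scale_def row_def)
      also have "\<dots> \<in> F.span (row ` D)"
        by (intro F.span_sum F.span_scale F.span_base) auto
      finally show "y \<in> F.span (row ` D)" using x by simp
    qed
    show "F.span (row ` D) \<subseteq> T ` A_space D"
    proof (rule F.span_minimal)
      show "row ` D \<subseteq> T ` A_space D" using Tb bA by (metis image_eqI image_subsetI)
      show "F.subspace (T ` A_space D)" by (rule lt.subspace_image[OF A_sub])
    qed
  qed
  have ker: "V_radical G D = {x \<in> A_space D. T x = 0}"
  proof (rule Set.set_eqI, rule HOL.iffI)
    fix x assume x: "x \<in> V_radical G D"
    have "T x e = 0" for e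
    proof (cases "e \<in> D")
      case True
      have "0 = A_form G D x (basis_vec e)" using x bA[OF True] by (auto simp: V_radical_def)
      also have "\<dots> = (\<Sum>d\<in>D. \<Sum>e'\<in>D. if e' = e then x d * B d e else 0)"
        unfolding A_form_def B_def
        by (intro sum.cong refl) (auto simp: basis_vec_def)
      also have "\<dots> = T x e" using True assms(2) by (simp add: T_def)
      finally show ?thesis by simp
    qed (simp add: T_def)
    then show "x \<in> {x \<in> A_space D. T x = 0}" using x by (auto simp: V_radical_def fun_eq_iff)
  next
    fix x assume x: "x \<in> {x \<in> A_space D. T x = 0}"
    have "A_form G D x y = 0" for y
    proof -
      have Tx: "T x = 0" using x by simp
      have "A_form G D x y = (\<Sum>e\<in>D. y e * (\<Sum>d\<in>D. x d * B d e))"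
        unfolding A_form_def B_def by (rule form_swap)
      also have "\<dots> = (\<Sum>e\<in>D. y e * T x e)"
        by (rule sum.cong[OF refl]) (simp only: T_def if_True)
      also have "\<dots> = 0" by (simp only: Tx zero_fun_def mult_zero_right sum.neutral_const)
      finally show ?thesis .
    qed
    then show "x \<in> V_radical G D" using x by (auto simp: V_radical_def)
  qed
  have cols: "(\<lambda>e. (\<lambda>d. if d \<in> D then adj_matrix G D d e else 0)) ` D = row ` D"
  proof (rule image_cong[OF refl])
    fix e assume e: "e \<in> D"
    show "(\<lambda>d. if d \<in> D then adj_matrix G D d e else 0) = row e"
      using e adj_iff[OF assms(1)]
      by (auto simp: fun_eq_iff row_def B_def adj_matrix_def commute_def)
  qed
  have "F.dim (T ` A_space D) + F.dim {x \<in> A_space D. T x = 0} = F.dim (A_space D)"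
    by (rule F.rank_nullity_sub[OF lin A_sub _ A_span[OF assms(2)]]) (use assms(2) in simp)
  then show ?thesis
    unfolding quotient_dim_def f2_rank_def cols ker using img by (simp add: F.dim_span)
qed

end
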